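(* Let $E$ be a finite set and $\underline{I}=(I_\omega)_{\omega\in E}$ a family of non-empty finite sets. The causal switch spaces $\mathrm{CSwitch}(\underline{I})$ are exactly the causally complete spaces of input histories $\Theta$ with $E^\Theta=E$, $I^\Theta_\omega=I_\omega$ for all $\omega$, and $\Theta=\mathrm{Ext}(\Theta)$.
   Context: A partial function on $(Y_x)_{x\in X}$ is a function $f$ with $\mathrm{dom}(f)\subseteq X$ and $f(x)\in Y_x$; ordered by restriction. Compatible = agreeing on common domain; a compatible set $\mathcal F$ has join $\bigvee\mathcal F$ (union). $\Theta$ is $\vee$-prime if for compatible $\mathcal F\subseteq\Theta$ with $\bigvee\mathcal F\in\Theta$ we have $\bigvee\mathcal F\in\mathcal F$. A space of input histories is a finite $\vee$-prime set of partial functions; $E^\Theta=\bigcup_{h\in\Theta}\mathrm{dom}(h)$, $I^\Theta_\omega=\{h(\omega):h\in\Theta,\omega\in\mathrm{dom}(h)\}$, $\mathrm{Ext}(\Theta)=\{\bigvee\mathcal F:\emptyset\ne\mathcal F\subseteq\Theta\text{ compatible}\}$. Free-choice: maximal elements of $\mathrm{Ext}(\Theta)$ are exactly the total functions in $\prod_{\omega\in E^\Theta}I^\Theta_\omega$. $\mathrm{tips}_\Theta(h)=\mathrm{dom}(h)\setminus\bigcup\{\mathrm{dom}(k):k\in\mathrm{Ext}(\Theta),k<h\}$. Causally complete: free-choice and $|\mathrm{tips}_\Theta(h)|=1$ for all $h\in\Theta$. Conditional sequential composition: for $(\Theta'_k)_{k\in\max\mathrm{Ext}(\Theta)}$ with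 disjoint event sets from $\Theta$, $\Theta\rightsquigarrow(\Theta'_k)_k=\Theta\cup\{k\vee h':k\in\max\mathrm{Ext}(\Theta),h'\in\Theta'_k\}$. Causal switch spaces, by induction on $|E|$: if $E=\emptyset$ the only one is the empty space; otherwise $\mathrm{CSwitch}(\underline I)$ consists of all $\Theta_{\omega_1}\rightsquigarrow(\Theta'_i)_{i\in I_{\omega_1}}$ with $\omega_1\in E$, $\Theta_{\omega_1}=\{\{\omega_1\mapsto i\}:i\in I_{\omega_1}\}$ (its maximal extended histories $\{\omega_1\mapsto i\}$ identified with $i$), and each $\Theta'_i\in\mathrm{CSwitch}((I_\omega)_{\omega\in E\setminus\{\omega_1\}})$. *)

theory Defs
  imports Main
begin

text \<open>Partial functions on a family of codomains are modelled as maps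
  'e \<rightharpoonup> 'v (a single ambient value type 'v; the fibre sets I_\<omega> are subsets of 'v).\<close>

definition compatible :: "('e \<rightharpoonup> 'v) set \<Rightarrow> bool" where
  "compatible F \<longleftrightarrow> (\<forall>f\<in>F. \<forall>g\<in>F. \<forall>x\<in>dom f \<inter> dom g. f x = g x)"

definition join :: "('e \<rightharpoonup> 'v) set \<Rightarrow> ('e \<rightharpoonup> 'v)" where
  "join F = (\<lambda>x. if \<exists>f\<in>F. x \<in> dom f then (SOME f. f \<in> F \<and> x \<in> dom f) x else None)"

definition strict_restr :: "('e \<rightharpoonup> 'v) \<Rightarrow> ('e \<rightharpoonup> 'v) \<Rightarrow> bool" where
  "strict_restr k h \<longleftrightarrow> k \<subseteq>\<^sub>m h \<and> k \<noteq> h"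

definition vee_prime :: "('e \<rightharpoonup> 'v) set \<Rightarrow> bool" where
  "vee_prime \<Theta> \<longleftrightarrow> (\<forall>F. F \<subseteq> \<Theta> \<and> compatible F \<and> join F \<in> \<Theta> \<longrightarrow> join F \<in> F)"

definition space_of_input_histories :: "('e \<rightharpoonup> 'v) set \<Rightarrow> bool" where
  "space_of_input_histories \<Theta> \<longleftrightarrow> finite \<Theta> \<and> vee_prime \<Theta>"

definition events :: "('e \<rightharpoonup> 'v) set \<Rightarrow> 'e set" where
  "events \<Theta> = (\<Union>h\<in>\<Theta>. dom h)"

definition inputs :: "('e \<rightharpoonup> 'v) set \<Rightarrow> 'e \<Rightarrow> 'v set" where
  "inputs \<Theta> \<omega> = {the (h \<omega>) | h. h \<in> \<Theta> \<and> \<omega> \<in> dom h}"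

definition Ext :: "('e \<rightharpoonup> 'v) set \<Rightarrow> ('e \<rightharpoonup> 'v) set" where
  "Ext \<Theta> = {join F | F. F \<noteq> {} \<and> F \<subseteq> \<Theta> \<and> compatible F}"

definition maxExt :: "('e \<rightharpoonup> 'v) set \<Rightarrow> ('e \<rightharpoonup> 'v) set" where
  "maxExt \<Theta> = {k \<in> Ext \<Theta>. \<forall>k'\<in>Ext \<Theta>. k \<subseteq>\<^sub>m k' \<longrightarrow> k' = k}"

text \<open>Free choice. Convention: the empty space (no events) counts as free-choice,
  matching the paper's base case CSwitch of the empty family = the empty space.\<close>
definition free_choice :: "('e \<rightharpoonup> 'v) set \<Rightarrow> bool" where
  "free_choice \<Theta> \<longleftrightarrow> \<Theta> = {} \<or>
     maxExt \<Theta> = {k. dom k = events \<Theta> \<and> (\<forall>\<omega>\<in>events \<Theta>. the (k \<omega>) \<in> inputs \<Theta> \<omega>)}"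

definition tips :: "('e \<rightharpoonup> 'v) set \<Rightarrow> ('e \<rightharpoonup> 'v) \<Rightarrow> 'e set" where
  "tips \<Theta> h = dom h - \<Union>{dom k | k. k \<in> Ext \<Theta> \<and> strict_restr k h}"

definition causally_complete :: "('e \<rightharpoonup> 'v) set \<Rightarrow> bool" where
  "causally_complete \<Theta> \<longleftrightarrow> free_choice \<Theta> \<and> (\<forall>h\<in>\<Theta>. card (tips \<Theta> h) = 1)"

text \<open>Conditional sequential composition; the family is indexed by the maximal extended histories.\<close>
definition cond_seq :: "('e \<rightharpoonup> 'v) set \<Rightarrow> (('e \<rightharpoonup> 'v) \<Rightarrow> ('e \<rightharpoonup> 'v) set) \<Rightarrow> ('e \<rightharpoonup> 'v) set" where
  "cond_seq \<Theta> \<Theta>' = \<Theta> \<union> {join {k, h'} | k h'. k \<in> maxExt \<Theta> \<and> h' \<in> \<Theta>' k}"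

definition single_event_space :: "'e \<Rightarrow> ('e \<Rightarrow> 'v set) \<Rightarrow> ('e \<rightharpoonup> 'v) set" where
  "single_event_space \<omega> I = {[\<omega> \<mapsto> i] | i. i \<in> I \<omega>}"

text \<open>Causal switch spaces CSwitch((I_\<omega>)_{\<omega>\<in>E}); only the values of I on E matter.
  The family (\<Theta>'_i)_{i\<in>I_\<omega>1} is a function of i, and the maximal extended history
  [\<omega>1 \<mapsto> i] is identified with i.\<close>
inductive cswitch :: "'e set \<Rightarrow> ('e \<Rightarrow> 'v set) \<Rightarrow> ('e \<rightharpoonup> 'v) set \<Rightarrow> bool" where
  empty: "cswitch {} I {}"
| step: "\<lbrakk> E \<noteq> {}; \<omega>1 \<in> E; \<forall>i\<in>I \<omega>1. cswitch (E - {\<omega>1}) I (\<Theta>' i) \<rbrakk>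
         \<Longrightarrow> cswitch E I (cond_seq (single_event_space \<omega>1 I) (\<lambda>k. \<Theta>' (the (k \<omega>1))))"

end

theory Submission
  imports Defs
begin


lemma compat2: "compatible {a,b} \<longleftrightarrow> (\<forall>x\<in>dom a \<inter> dom b. a x = b x)"
  unfolding compatible_def by (simp add: Int_commute) (metis IntI)

lemma join_le: assumes "compatible F" "f \<in> F" shows "f \<subseteq>\<^sub>m join F"
  unfolding map_le_def
proof
  fix x assume x: "x \<in> dom f"
  hence ex: "\<exists>g. g \<in> F \<and> x \<in> dom g" using assms by blast
  let ?g = "SOME g. g \<in> F \<and> x \<in> dom g"
  have g: "?g \<in> F \<and> x \<in> dom ?g" using someI_ex[OF ex] .
  have "join F x = ?g x" unfolding join_def using ex by auto
  also have "\<dots> = f x" using assms g x unfolding compatible_def by blast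
  finally show "f x = join F x" by simp
qed

lemma join_none: "(\<forall>f\<in>F. x \<notin> dom f) \<Longrightarrow> join F x = None"
  unfolding join_def by auto

lemma join_eq: assumes "m \<in> F" "\<forall>f\<in>F. f \<subseteq>\<^sub>m m" shows "join F = m"
proof
  fix x
  show "join F x = m x"
  proof (cases "x \<in> dom m")
    case True
    hence ex: "\<exists>g. g \<in> F \<and> x \<in> dom g" using assms by blast
    let ?g = "SOME g. g \<in> F \<and> x \<in> dom g"
    have g: "?g \<in> F \<and> x \<in> dom ?g" using someI_ex[OF ex] .
    have "join F x = ?g x" unfolding join_def using ex by auto
    also have "\<dots> = m x" using assms g unfolding map_le_def by blast
    finally show ?thesis .
  next
    case False
    hence "\<forall>f\<in>F. x \<notin> dom f" using assms map_le_implies_dom_le by blast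
    hence "join F x = None" by (rule join_none)
    thus ?thesis using False by (simp add: domIff)
  qed
qed

lemma join_single[simp]: "join {h} = h"
  by (rule join_eq) auto

lemma join_pair: assumes "\<omega> \<notin> dom g" shows "join {[\<omega> \<mapsto> i], g} = g(\<omega> \<mapsto> i)"
proof
  fix x
  have c: "compatible {[\<omega> \<mapsto> i], g}" using assms by (auto simp: compat2)
  show "join {[\<omega> \<mapsto> i], g} x = (g(\<omega> \<mapsto> i)) x"
  proof (cases "x = \<omega>")
    case True
    then show ?thesis using join_le[OF c, of "[\<omega> \<mapsto> i]"] by (auto simp: map_le_def)
  next
    case False
    show ?thesis
    proof (cases "x \<in> dom g")
      case True
      then show ?thesis using join_le[OF c, of g] False by (auto simp: map_le_def)
    next
      case F2: False
      then show ?thesis using False by (subst join_none) (auto simp: domIff)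
    qed
  qed
qed

definition tree :: "('e \<rightharpoonup> 'v) set \<Rightarrow> bool" where
  "tree \<Theta> \<longleftrightarrow> (\<forall>a\<in>\<Theta>. \<forall>b\<in>\<Theta>. compatible {a,b} \<longrightarrow> a \<subseteq>\<^sub>m b \<or> b \<subseteq>\<^sub>m a)"

lemma chain_greatest:
  "finite F \<Longrightarrow> F \<noteq> {} \<Longrightarrow> (\<forall>a\<in>F. \<forall>b\<in>F. a \<subseteq>\<^sub>m b \<or> b \<subseteq>\<^sub>m a) \<Longrightarrow> \<exists>m\<in>F. \<forall>f\<in>F. f \<subseteq>\<^sub>m m"
proof (induction F rule: finite_ne_induct)
  case (singleton x) then show ?case by auto
next
  case (insert x F)
  then obtain m where m: "m \<in> F" "\<forall>f\<in>F. f \<subseteq>\<^sub>m m" by auto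
  show ?case
  proof (cases "x \<subseteq>\<^sub>m m")
    case True then show ?thesis using m by auto
  next
    case False
    hence "m \<subseteq>\<^sub>m x" using insert.prems m by auto
    then show ?thesis using m by (auto intro: map_le_trans)
  qed
qed

lemma tree_join_in:
  assumes "finite \<Theta>" "tree \<Theta>" "F \<subseteq> \<Theta>" "F \<noteq> {}" "compatible F"
  shows "join F \<in> F"
proof -
  have "finite F" using assms finite_subset by blast
  moreover have "\<forall>a\<in>F. \<forall>b\<in>F. a \<subseteq>\<^sub>m b \<or> b \<subseteq>\<^sub>m a"
  proof (intro ballI)
    fix a b assume "a \<in> F" "b \<in> F"
    hence "compatible {a,b}" using assms(5) unfolding compatible_def by blast
    thus "a \<subseteq>\<^sub>m b \<or> b \<subseteq>\<^sub>m a" using assms \<open>a \<in> F\<close> \<open>b \<in> F\<close> unfolding tree_def by blast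
  qed
  ultimately obtain m where "m \<in> F" "\<forall>f\<in>F. f \<subseteq>\<^sub>m m" using chain_greatest assms(4) by blast
  thus ?thesis using join_eq by metis
qed

lemma join_empty: "join {} = Map.empty"
  unfolding join_def by auto

lemma tree_imp:
  assumes "finite \<Theta>" "tree \<Theta>" "Map.empty \<notin> \<Theta>"
  shows "vee_prime \<Theta>" "Ext \<Theta> = \<Theta>"
proof -
  show "vee_prime \<Theta>" unfolding vee_prime_def
  proof (intro allI impI)
    fix F assume F: "F \<subseteq> \<Theta> \<and> compatible F \<and> join F \<in> \<Theta>"
    show "join F \<in> F"
    proof (cases "F = {}")
      case True then show ?thesis using F assms(3) by (simp add: join_empty)
    next
      case False then show ?thesis using tree_join_in assms F by blast
    qed
  qed
  show "Ext \<Theta> = \<Theta>"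
  proof
    show "Ext \<Theta> \<subseteq> \<Theta>" unfolding Ext_def using tree_join_in[OF assms(1,2)] by blast
    show "\<Theta> \<subseteq> Ext \<Theta>" unfolding Ext_def
    proof
      fix h assume "h \<in> \<Theta>"
      moreover have "compatible {h}" unfolding compatible_def by auto
      ultimately show "h \<in> {join F |F. F \<noteq> {} \<and> F \<subseteq> \<Theta> \<and> compatible F}"
        by (intro CollectI exI[of _ "{h}"]) auto
    qed
  qed
qed

lemma imp_tree:
  fixes \<Theta> :: "('a \<rightharpoonup> 'b) set"
  assumes "\<Theta> = Ext \<Theta>" "vee_prime \<Theta>"
  shows "tree \<Theta>" "Map.empty \<notin> \<Theta>"
proof -
  show "Map.empty \<notin> \<Theta>"
  proof
    assume e: "Map.empty \<in> \<Theta>"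
    have c: "compatible ({}::('a \<rightharpoonup> 'b) set)" unfolding compatible_def by auto
    have j: "join ({}::('a \<rightharpoonup> 'b) set) \<in> \<Theta>" using e by (simp add: join_empty)
    have "join ({}::('a \<rightharpoonup> 'b) set) \<in> {}" using assms(2) c j unfolding vee_prime_def by blast
    thus False by simp
  qed
  show "tree \<Theta>" unfolding tree_def
  proof (intro ballI impI)
    fix a b assume ab: "a \<in> \<Theta>" "b \<in> \<Theta>" "compatible {a,b}"
    hence "join {a,b} \<in> Ext \<Theta>" unfolding Ext_def by blast
    moreover have "{a,b} \<subseteq> \<Theta>" using ab by auto
    ultimately have "join {a,b} \<in> {a,b}" using assms ab unfolding vee_prime_def by blast
    moreover have "a \<subseteq>\<^sub>m join {a,b}" "b \<subseteq>\<^sub>m join {a,b}" using join_le ab by auto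
    ultimately show "a \<subseteq>\<^sub>m b \<or> b \<subseteq>\<^sub>m a" by auto
  qed
qed



definition maxs :: "('e \<rightharpoonup> 'v) set \<Rightarrow> ('e \<rightharpoonup> 'v) set" where
  "maxs \<Theta> = {k\<in>\<Theta>. \<forall>k'\<in>\<Theta>. k \<subseteq>\<^sub>m k' \<longrightarrow> k' = k}"

definition Tot :: "'e set \<Rightarrow> ('e \<Rightarrow> 'v set) \<Rightarrow> ('e \<rightharpoonup> 'v) set" where
  "Tot E I = {k. dom k = E \<and> (\<forall>\<omega>\<in>E. the (k \<omega>) \<in> I \<omega>)}"

definition tips' :: "('e \<rightharpoonup> 'v) set \<Rightarrow> ('e \<rightharpoonup> 'v) \<Rightarrow> 'e set" where
  "tips' \<Theta> h = dom h - \<Union>{dom k | k. k \<in> \<Theta> \<and> strict_restr k h}"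

definition good :: "'e set \<Rightarrow> ('e \<Rightarrow> 'v set) \<Rightarrow> ('e \<rightharpoonup> 'v) set \<Rightarrow> bool" where
  "good E I \<Theta> \<longleftrightarrow> finite \<Theta> \<and> tree \<Theta> \<and> Map.empty \<notin> \<Theta> \<and> events \<Theta> = E
     \<and> (\<forall>\<omega>\<in>E. inputs \<Theta> \<omega> = I \<omega>) \<and> (\<Theta> = {} \<or> maxs \<Theta> = Tot E I)
     \<and> (\<forall>h\<in>\<Theta>. card (tips' \<Theta> h) = 1)"

lemma goodD:
  assumes "good E I \<Theta>"
  shows "finite \<Theta>" "tree \<Theta>" "Map.empty \<notin> \<Theta>" "events \<Theta> = E"
     "\<And>\<omega>. \<omega>\<in>E \<Longrightarrow> inputs \<Theta> \<omega> = I \<omega>" "\<Theta> = {} \<or> maxs \<Theta> = Tot E I"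
     "\<And>h. h\<in>\<Theta> \<Longrightarrow> card (tips' \<Theta> h) = 1"
  using assms unfolding good_def by auto

lemma Tot_cong: "(\<forall>\<omega>\<in>E. I \<omega> = J \<omega>) \<Longrightarrow> Tot E I = Tot E J"
  unfolding Tot_def by auto

lemma rhs_iff_good:
  "(space_of_input_histories \<Theta> \<and> causally_complete \<Theta> \<and> events \<Theta> = E
     \<and> (\<forall>\<omega>\<in>E. inputs \<Theta> \<omega> = I \<omega>) \<and> \<Theta> = Ext \<Theta>) \<longleftrightarrow> good E I \<Theta>"
proof
  assume a: "space_of_input_histories \<Theta> \<and> causally_complete \<Theta> \<and> events \<Theta> = E
     \<and> (\<forall>\<omega>\<in>E. inputs \<Theta> \<omega> = I \<omega>) \<and> \<Theta> = Ext \<Theta>"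
  hence fin: "finite \<Theta>" and vp: "vee_prime \<Theta>" and ext: "Ext \<Theta> = \<Theta>"
    unfolding space_of_input_histories_def by auto
  have t: "tree \<Theta>" "Map.empty \<notin> \<Theta>" using imp_tree ext vp by metis+
  have m: "maxExt \<Theta> = maxs \<Theta>" unfolding maxExt_def maxs_def ext ..
  have tp: "tips \<Theta> h = tips' \<Theta> h" for h unfolding tips_def tips'_def ext ..
  have tot: "{k. dom k = events \<Theta> \<and> (\<forall>\<omega>\<in>events \<Theta>. the (k \<omega>) \<in> inputs \<Theta> \<omega>)} = Tot E I"
    using a unfolding Tot_def by auto
  show "good E I \<Theta>" unfolding good_def using a fin t m tp tot
    unfolding causally_complete_def free_choice_def by auto
next
  assume g: "good E I \<Theta>"
  hence fin: "finite \<Theta>" and t: "tree \<Theta>" "Map.empty \<notin> \<Theta>" unfolding good_def by auto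
  have vp: "vee_prime \<Theta>" and ext: "Ext \<Theta> = \<Theta>" using tree_imp fin t by metis+
  have m: "maxExt \<Theta> = maxs \<Theta>" unfolding maxExt_def maxs_def ext ..
  have tp: "tips \<Theta> h = tips' \<Theta> h" for h unfolding tips_def tips'_def ext ..
  have tot: "{k. dom k = events \<Theta> \<and> (\<forall>\<omega>\<in>events \<Theta>. the (k \<omega>) \<in> inputs \<Theta> \<omega>)} = Tot E I"
    using g unfolding Tot_def good_def by auto
  show "space_of_input_histories \<Theta> \<and> causally_complete \<Theta> \<and> events \<Theta> = E
     \<and> (\<forall>\<omega>\<in>E. inputs \<Theta> \<omega> = I \<omega>) \<and> \<Theta> = Ext \<Theta>"
    using g fin vp ext m tp tot unfolding good_def space_of_input_histories_def
      causally_complete_def free_choice_def by auto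
qed

definition sw :: "'e \<Rightarrow> ('e \<Rightarrow> 'v set) \<Rightarrow> ('v \<Rightarrow> ('e \<rightharpoonup> 'v) set) \<Rightarrow> ('e \<rightharpoonup> 'v) set" where
  "sw \<omega> I \<Theta>' = (\<Union>i\<in>I \<omega>. (\<lambda>g. g(\<omega> \<mapsto> i)) ` insert Map.empty (\<Theta>' i))"

definition WF :: "'e \<Rightarrow> ('e \<Rightarrow> 'v set) \<Rightarrow> ('v \<Rightarrow> ('e \<rightharpoonup> 'v) set) \<Rightarrow> bool" where
  "WF \<omega> I \<Theta>' \<longleftrightarrow> (\<forall>i\<in>I \<omega>. (\<forall>g\<in>\<Theta>' i. \<omega> \<notin> dom g) \<and> Map.empty \<notin> \<Theta>' i)"

lemma le_L: assumes "\<omega> \<notin> dom g" "\<omega> \<notin> dom g'"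
  shows "(g(\<omega> \<mapsto> i) \<subseteq>\<^sub>m g'(\<omega> \<mapsto> j)) \<longleftrightarrow> (i = j \<and> g \<subseteq>\<^sub>m g')"
proof
  assume h: "g(\<omega> \<mapsto> i) \<subseteq>\<^sub>m g'(\<omega> \<mapsto> j)"
  have "(g(\<omega> \<mapsto> i)) \<omega> = (g'(\<omega> \<mapsto> j)) \<omega>" using h unfolding map_le_def by simp
  hence "i = j" by simp
  moreover have "g \<subseteq>\<^sub>m g'"
    unfolding map_le_def
  proof
    fix x assume x: "x \<in> dom g"
    hence "x \<noteq> \<omega>" using assms by auto
    moreover have "x \<in> dom (g(\<omega> \<mapsto> i))" using x by simp
    hence "(g(\<omega> \<mapsto> i)) x = (g'(\<omega> \<mapsto> j)) x" using h unfolding map_le_def by blast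
    ultimately show "g x = g' x" by simp
  qed
  ultimately show "i = j \<and> g \<subseteq>\<^sub>m g'" by simp
next
  assume "i = j \<and> g \<subseteq>\<^sub>m g'"
  thus "g(\<omega> \<mapsto> i) \<subseteq>\<^sub>m g'(\<omega> \<mapsto> j)" unfolding map_le_def by auto
qed

lemma eq_L: "\<omega> \<notin> dom g \<Longrightarrow> \<omega> \<notin> dom g' \<Longrightarrow>
   (g(\<omega> \<mapsto> i) = g'(\<omega> \<mapsto> j)) \<longleftrightarrow> (i = j \<and> g = g')"
  by (metis le_L map_le_antisym map_le_refl)

lemma compat_L: assumes "\<omega> \<notin> dom g" "\<omega> \<notin> dom g'"
  shows "compatible {g(\<omega> \<mapsto> i), g'(\<omega> \<mapsto> j)} \<longleftrightarrow> (i = j \<and> compatible {g, g'})"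
proof
  assume h: "compatible {g(\<omega> \<mapsto> i), g'(\<omega> \<mapsto> j)}"
  hence h': "\<forall>x\<in>dom (g(\<omega> \<mapsto> i)) \<inter> dom (g'(\<omega> \<mapsto> j)). (g(\<omega> \<mapsto> i)) x = (g'(\<omega> \<mapsto> j)) x"
    unfolding compat2 .
  have "i = j" using h'[rule_format, of \<omega>] by simp
  moreover have "\<forall>x\<in>dom g \<inter> dom g'. g x = g' x"
  proof
    fix x assume x: "x \<in> dom g \<inter> dom g'"
    hence "x \<noteq> \<omega>" using assms by auto
    thus "g x = g' x" using h'[rule_format, of x] x by auto
  qed
  ultimately show "i = j \<and> compatible {g, g'}" unfolding compat2 by simp
next
  assume "i = j \<and> compatible {g, g'}"
  thus "compatible {g(\<omega> \<mapsto> i), g'(\<omega> \<mapsto> j)}" unfolding compat2 by auto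
qed

lemma restr_L: "\<omega> \<notin> dom g \<Longrightarrow> (g(\<omega> \<mapsto> i))(\<omega> := None) = g"
  by (auto simp: domIff)

lemma le_empty_iff: "k \<subseteq>\<^sub>m Map.empty \<longleftrightarrow> k = Map.empty"
  unfolding map_le_def by (auto simp: fun_eq_iff domIff)

lemma maxs_insert_empty: "Map.empty \<notin> T \<Longrightarrow> maxs (insert Map.empty T) = (if T = {} then {Map.empty} else maxs T)"
proof (cases "T = {}")
  case False
  then obtain t where t: "t \<in> T" by auto
  assume e: "Map.empty \<notin> T"
  have "Map.empty \<notin> maxs (insert Map.empty T)" unfolding maxs_def using t e by force
  moreover have "maxs (insert Map.empty T) - {Map.empty} = maxs T" unfolding maxs_def using e by (auto simp add: le_empty_iff)
  ultimately show ?thesis using False by auto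
qed (auto simp: maxs_def le_empty_iff)

lemma Tot_empty[simp]: "Tot {} I = {Map.empty}"
  unfolding Tot_def by auto

definition pick :: "'e set \<Rightarrow> ('e \<Rightarrow> 'v set) \<Rightarrow> ('e \<rightharpoonup> 'v)" where
  "pick E I = (\<lambda>x. if x \<in> E then Some (SOME v. v \<in> I x) else None)"

lemma pick_Tot: "\<forall>x\<in>E. I x \<noteq> {} \<Longrightarrow> pick E I \<in> Tot E I"
  unfolding Tot_def pick_def by (auto simp: some_in_eq split: if_splits)

lemma pick_upd_Tot: "\<forall>x\<in>E. I x \<noteq> {} \<Longrightarrow> x \<in> E \<Longrightarrow> v \<in> I x \<Longrightarrow> (pick E I)(x \<mapsto> v) \<in> Tot E I"
  using pick_Tot[of E I] unfolding Tot_def by auto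



lemma mem_sw: "h \<in> sw \<omega> I \<Theta>' \<longleftrightarrow> (\<exists>i\<in>I \<omega>. \<exists>g\<in>insert Map.empty (\<Theta>' i). h = g(\<omega> \<mapsto> i))"
  unfolding sw_def by auto

lemma strict_restr_empty: "\<not> strict_restr k Map.empty"
  unfolding strict_restr_def using le_empty_iff by auto

locale swl =
  fixes \<omega> :: 'e and I :: "'e \<Rightarrow> 'v set" and \<Theta>' :: "'v \<Rightarrow> ('e \<rightharpoonup> 'v) set"
  assumes wf: "WF \<omega> I \<Theta>'"
begin

lemma nodom: "i \<in> I \<omega> \<Longrightarrow> g \<in> insert Map.empty (\<Theta>' i) \<Longrightarrow> \<omega> \<notin> dom g"
  using wf unfolding WF_def by auto

lemma nempty: "i \<in> I \<omega> \<Longrightarrow> Map.empty \<notin> \<Theta>' i"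
  using wf unfolding WF_def by auto

lemma empty_notin_sw: "Map.empty \<notin> sw \<omega> I \<Theta>'"
  unfolding mem_sw by (auto simp: fun_eq_iff)

lemma finite_sw_iff: assumes "finite (I \<omega>)"
  shows "finite (sw \<omega> I \<Theta>') \<longleftrightarrow> (\<forall>i\<in>I \<omega>. finite (\<Theta>' i))"
proof
  assume f: "finite (sw \<omega> I \<Theta>')"
  show "\<forall>i\<in>I \<omega>. finite (\<Theta>' i)"
  proof
    fix i assume i: "i \<in> I \<omega>"
    have "\<Theta>' i \<subseteq> (\<lambda>h. h(\<omega> := None)) ` sw \<omega> I \<Theta>'"
    proof
      fix g assume g: "g \<in> \<Theta>' i"
      hence "g = (g(\<omega> \<mapsto> i))(\<omega> := None)" using restr_L nodom i by simp
      moreover have "g(\<omega> \<mapsto> i) \<in> sw \<omega> I \<Theta>'" using g i unfolding mem_sw by auto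
      ultimately show "g \<in> (\<lambda>h. h(\<omega> := None)) ` sw \<omega> I \<Theta>'" by blast
    qed
    thus "finite (\<Theta>' i)" using f finite_subset by blast
  qed
next
  assume "\<forall>i\<in>I \<omega>. finite (\<Theta>' i)"
  thus "finite (sw \<omega> I \<Theta>')" unfolding sw_def using assms by auto
qed

lemma tree_sw_iff: "tree (sw \<omega> I \<Theta>') \<longleftrightarrow> (\<forall>i\<in>I \<omega>. tree (\<Theta>' i))"
proof
  assume t: "tree (sw \<omega> I \<Theta>')"
  show "\<forall>i\<in>I \<omega>. tree (\<Theta>' i)" unfolding tree_def
  proof (intro ballI impI)
    fix i a b assume i: "i \<in> I \<omega>" and ab: "a \<in> \<Theta>' i" "b \<in> \<Theta>' i" "compatible {a,b}"
    have n: "\<omega> \<notin> dom a" "\<omega> \<notin> dom b" using nodom i ab by auto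
    have "a(\<omega> \<mapsto> i) \<in> sw \<omega> I \<Theta>'" "b(\<omega> \<mapsto> i) \<in> sw \<omega> I \<Theta>'" using i ab unfolding mem_sw by auto
    moreover have "compatible {a(\<omega> \<mapsto> i), b(\<omega> \<mapsto> i)}" using compat_L[OF n] ab by simp
    ultimately have "a(\<omega> \<mapsto> i) \<subseteq>\<^sub>m b(\<omega> \<mapsto> i) \<or> b(\<omega> \<mapsto> i) \<subseteq>\<^sub>m a(\<omega> \<mapsto> i)"
      using t unfolding tree_def by blast
    thus "a \<subseteq>\<^sub>m b \<or> b \<subseteq>\<^sub>m a" using le_L n by metis
  qed
next
  assume t: "\<forall>i\<in>I \<omega>. tree (\<Theta>' i)"
  show "tree (sw \<omega> I \<Theta>')" unfolding tree_def
  proof (intro ballI impI)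
    fix a b assume a: "a \<in> sw \<omega> I \<Theta>'" and b: "b \<in> sw \<omega> I \<Theta>'" and c: "compatible {a,b}"
    obtain i g where i: "i \<in> I \<omega>" "g \<in> insert Map.empty (\<Theta>' i)" "a = g(\<omega> \<mapsto> i)" using a unfolding mem_sw by auto
    obtain j g' where j: "j \<in> I \<omega>" "g' \<in> insert Map.empty (\<Theta>' j)" "b = g'(\<omega> \<mapsto> j)" using b unfolding mem_sw by auto
    have n: "\<omega> \<notin> dom g" "\<omega> \<notin> dom g'" using nodom i j by auto
    have ij: "i = j" and cg: "compatible {g, g'}" using compat_L[OF n] c i j by auto
    have "g \<subseteq>\<^sub>m g' \<or> g' \<subseteq>\<^sub>m g"
    proof (cases "g = Map.empty \<or> g' = Map.empty")
      case True then show ?thesis by auto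
    next
      case False
      hence "g \<in> \<Theta>' i" "g' \<in> \<Theta>' i" using i j ij by auto
      then show ?thesis using t i cg unfolding tree_def by blast
    qed
    thus "a \<subseteq>\<^sub>m b \<or> b \<subseteq>\<^sub>m a" using le_L[OF n] i j ij by auto
  qed
qed

lemma maxs_sw: "maxs (sw \<omega> I \<Theta>') = (\<Union>i\<in>I \<omega>. (\<lambda>g. g(\<omega> \<mapsto> i)) ` maxs (insert Map.empty (\<Theta>' i)))"
proof -
  have "h \<in> maxs (sw \<omega> I \<Theta>') \<longleftrightarrow> h \<in> (\<Union>i\<in>I \<omega>. (\<lambda>g. g(\<omega> \<mapsto> i)) ` maxs (insert Map.empty (\<Theta>' i)))" for h
  proof
    assume h: "h \<in> maxs (sw \<omega> I \<Theta>')"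
    then obtain i g where i: "i \<in> I \<omega>" "g \<in> insert Map.empty (\<Theta>' i)" "h = g(\<omega> \<mapsto> i)"
      unfolding maxs_def mem_sw by auto
    have "g \<in> maxs (insert Map.empty (\<Theta>' i))" unfolding maxs_def
    proof (intro CollectI conjI ballI impI)
      fix k' assume k': "k' \<in> insert Map.empty (\<Theta>' i)" "g \<subseteq>\<^sub>m k'"
      have n: "\<omega> \<notin> dom g" "\<omega> \<notin> dom k'" using nodom i k' by auto
      have "k'(\<omega> \<mapsto> i) \<in> sw \<omega> I \<Theta>'" using i k' unfolding mem_sw by auto
      moreover have "h \<subseteq>\<^sub>m k'(\<omega> \<mapsto> i)" using le_L[OF n] i k' by auto
      ultimately have "k'(\<omega> \<mapsto> i) = g(\<omega> \<mapsto> i)" using h i unfolding maxs_def by auto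
      thus "k' = g" using eq_L n by metis
    qed (use i in auto)
    thus "h \<in> (\<Union>i\<in>I \<omega>. (\<lambda>g. g(\<omega> \<mapsto> i)) ` maxs (insert Map.empty (\<Theta>' i)))" using i by auto
  next
    assume "h \<in> (\<Union>i\<in>I \<omega>. (\<lambda>g. g(\<omega> \<mapsto> i)) ` maxs (insert Map.empty (\<Theta>' i)))"
    then obtain i g where i: "i \<in> I \<omega>" "g \<in> maxs (insert Map.empty (\<Theta>' i))" "h = g(\<omega> \<mapsto> i)" by auto
    have gi: "g \<in> insert Map.empty (\<Theta>' i)" using i unfolding maxs_def by auto
    show "h \<in> maxs (sw \<omega> I \<Theta>')" unfolding maxs_def
    proof (intro CollectI conjI ballI impI)
      show "h \<in> sw \<omega> I \<Theta>'" using i gi unfolding mem_sw by auto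
      fix k' assume k': "k' \<in> sw \<omega> I \<Theta>'" "h \<subseteq>\<^sub>m k'"
      then obtain j g' where j: "j \<in> I \<omega>" "g' \<in> insert Map.empty (\<Theta>' j)" "k' = g'(\<omega> \<mapsto> j)" unfolding mem_sw by auto
      have n: "\<omega> \<notin> dom g" "\<omega> \<notin> dom g'" using nodom i j gi by auto
      have "i = j" "g \<subseteq>\<^sub>m g'" using le_L[OF n] k' i j by auto
      hence "g' = g" using i j unfolding maxs_def by auto
      thus "k' = h" using j i \<open>i = j\<close> by simp
    qed
  qed
  thus ?thesis by blast
qed

lemma Tot_split: assumes "\<omega> \<in> E"
  shows "Tot E I = (\<Union>i\<in>I \<omega>. (\<lambda>g. g(\<omega> \<mapsto> i)) ` Tot (E - {\<omega>}) I)"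
proof -
  have "k \<in> Tot E I \<longleftrightarrow> k \<in> (\<Union>i\<in>I \<omega>. (\<lambda>g. g(\<omega> \<mapsto> i)) ` Tot (E - {\<omega>}) I)" for k
  proof
    assume k: "k \<in> Tot E I"
    hence "\<omega> \<in> dom k" using assms unfolding Tot_def by auto
    then obtain i where ki: "k \<omega> = Some i" by auto
    hence "i \<in> I \<omega>" using k assms unfolding Tot_def by force
    moreover have "k = (k(\<omega> := None))(\<omega> \<mapsto> i)" using ki by (auto simp: fun_eq_iff)
    moreover have "k(\<omega> := None) \<in> Tot (E - {\<omega>}) I" using k unfolding Tot_def by auto
    ultimately show "k \<in> (\<Union>i\<in>I \<omega>. (\<lambda>g. g(\<omega> \<mapsto> i)) ` Tot (E - {\<omega>}) I)" by blast
  next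
    assume "k \<in> (\<Union>i\<in>I \<omega>. (\<lambda>g. g(\<omega> \<mapsto> i)) ` Tot (E - {\<omega>}) I)"
    then obtain i t where it: "i \<in> I \<omega>" "t \<in> Tot (E - {\<omega>}) I" "k = t(\<omega> \<mapsto> i)" by auto
    have "dom k = E" using it assms unfolding Tot_def by auto
    moreover have "\<forall>x\<in>E. the (k x) \<in> I x" using it unfolding Tot_def by auto
    ultimately show "k \<in> Tot E I" unfolding Tot_def by auto
  qed
  thus ?thesis by blast
qed

lemma Tot_nodom: "g \<in> Tot (E - {\<omega>}) J \<Longrightarrow> \<omega> \<notin> dom g"
  unfolding Tot_def by auto

lemma maxs_sw_iff: assumes "\<omega> \<in> E"
  shows "maxs (sw \<omega> I \<Theta>') = Tot E I \<longleftrightarrow> (\<forall>i\<in>I \<omega>. maxs (insert Map.empty (\<Theta>' i)) = Tot (E - {\<omega>}) I)"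
proof
  assume h: "maxs (sw \<omega> I \<Theta>') = Tot E I"
  have md: "maxs (insert Map.empty (\<Theta>' i)) \<subseteq> insert Map.empty (\<Theta>' i)" for i unfolding maxs_def by auto
  show "\<forall>i\<in>I \<omega>. maxs (insert Map.empty (\<Theta>' i)) = Tot (E - {\<omega>}) I"
  proof (intro ballI equalityI subsetI)
    fix i g assume i: "i \<in> I \<omega>" and g: "g \<in> maxs (insert Map.empty (\<Theta>' i))"
    have ng: "\<omega> \<notin> dom g" using nodom i g md by blast
    have "g(\<omega> \<mapsto> i) \<in> Tot E I" using h i g maxs_sw by auto
    then obtain j t where j: "j \<in> I \<omega>" "t \<in> Tot (E - {\<omega>}) I" "g(\<omega> \<mapsto> i) = t(\<omega> \<mapsto> j)"
      using Tot_split[OF assms] by auto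
    thus "g \<in> Tot (E - {\<omega>}) I" using eq_L[OF ng Tot_nodom[OF j(2)]] by auto
  next
    fix i t assume i: "i \<in> I \<omega>" and t: "t \<in> Tot (E - {\<omega>}) I"
    have "t(\<omega> \<mapsto> i) \<in> maxs (sw \<omega> I \<Theta>')" using h Tot_split[OF assms] i t by auto
    then obtain j g where j: "j \<in> I \<omega>" "g \<in> maxs (insert Map.empty (\<Theta>' j))" "t(\<omega> \<mapsto> i) = g(\<omega> \<mapsto> j)"
      using maxs_sw by auto
    have ng: "\<omega> \<notin> dom g" using nodom j md by blast
    thus "t \<in> maxs (insert Map.empty (\<Theta>' i))" using eq_L[OF Tot_nodom[OF t] ng] j by auto
  qed
next
  assume "\<forall>i\<in>I \<omega>. maxs (insert Map.empty (\<Theta>' i)) = Tot (E - {\<omega>}) I"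
  thus "maxs (sw \<omega> I \<Theta>') = Tot E I" using maxs_sw Tot_split[OF assms] by auto
qed

lemma strict_sw: assumes i: "i \<in> I \<omega>" and g: "g \<in> insert Map.empty (\<Theta>' i)"
  shows "{dom k | k. k \<in> sw \<omega> I \<Theta>' \<and> strict_restr k (g(\<omega> \<mapsto> i))}
       = {insert \<omega> (dom g') | g'. g' \<in> insert Map.empty (\<Theta>' i) \<and> strict_restr g' g}"
proof -
  have ng: "\<omega> \<notin> dom g" using nodom i g by auto
  have "S \<in> {dom k | k. k \<in> sw \<omega> I \<Theta>' \<and> strict_restr k (g(\<omega> \<mapsto> i))} \<longleftrightarrow>
        S \<in> {insert \<omega> (dom g') | g'. g' \<in> insert Map.empty (\<Theta>' i) \<and> strict_restr g' g}" for S
  proof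
    assume "S \<in> {dom k | k. k \<in> sw \<omega> I \<Theta>' \<and> strict_restr k (g(\<omega> \<mapsto> i))}"
    then obtain k where k: "S = dom k" "k \<in> sw \<omega> I \<Theta>'" "strict_restr k (g(\<omega> \<mapsto> i))" by auto
    then obtain j g' where j: "j \<in> I \<omega>" "g' \<in> insert Map.empty (\<Theta>' j)" "k = g'(\<omega> \<mapsto> j)" unfolding mem_sw by auto
    have n: "\<omega> \<notin> dom g'" using nodom j by auto
    have "i = j" "g' \<subseteq>\<^sub>m g" "g' \<noteq> g" using k j le_L[OF n ng] eq_L[OF n ng] unfolding strict_restr_def by auto
    thus "S \<in> {insert \<omega> (dom g') | g'. g' \<in> insert Map.empty (\<Theta>' i) \<and> strict_restr g' g}"
      using k j unfolding strict_restr_def by auto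
  next
    assume "S \<in> {insert \<omega> (dom g') | g'. g' \<in> insert Map.empty (\<Theta>' i) \<and> strict_restr g' g}"
    then obtain g' where g': "S = insert \<omega> (dom g')" "g' \<in> insert Map.empty (\<Theta>' i)" "strict_restr g' g" by auto
    have n: "\<omega> \<notin> dom g'" using nodom i g' by auto
    have "g'(\<omega> \<mapsto> i) \<in> sw \<omega> I \<Theta>'" using i g' unfolding mem_sw by auto
    moreover have "strict_restr (g'(\<omega> \<mapsto> i)) (g(\<omega> \<mapsto> i))" using g' le_L[OF n ng] eq_L[OF n ng]
      unfolding strict_restr_def by auto
    moreover have "S = dom (g'(\<omega> \<mapsto> i))" using g' by simp
    ultimately show "S \<in> {dom k | k. k \<in> sw \<omega> I \<Theta>' \<and> strict_restr k (g(\<omega> \<mapsto> i))}" by blast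
  qed
  thus ?thesis by blast
qed

lemma tips_sw_empty: assumes i: "i \<in> I \<omega>"
  shows "tips' (sw \<omega> I \<Theta>') [\<omega> \<mapsto> i] = {\<omega>}"
proof -
  have "{dom k | k. k \<in> sw \<omega> I \<Theta>' \<and> strict_restr k (Map.empty(\<omega> \<mapsto> i))} = {}"
    using strict_sw[OF i, of Map.empty] strict_restr_empty by auto
  thus ?thesis unfolding tips'_def by auto
qed

lemma tips_sw: assumes i: "i \<in> I \<omega>" and g: "g \<in> \<Theta>' i"
  shows "tips' (sw \<omega> I \<Theta>') (g(\<omega> \<mapsto> i)) = tips' (\<Theta>' i) g"
proof -
  have ng: "\<omega> \<notin> dom g" using nodom i g by auto
  have gne: "g \<noteq> Map.empty" using nempty i g by auto
  have se: "strict_restr Map.empty g" using gne unfolding strict_restr_def by auto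
  have "\<Union>{insert \<omega> (dom g') | g'. g' \<in> insert Map.empty (\<Theta>' i) \<and> strict_restr g' g}
      = insert \<omega> (\<Union>{dom g' | g'. g' \<in> \<Theta>' i \<and> strict_restr g' g})"
    using se by blast
  hence "tips' (sw \<omega> I \<Theta>') (g(\<omega> \<mapsto> i)) = insert \<omega> (dom g) - insert \<omega> (\<Union>{dom g' | g'. g' \<in> \<Theta>' i \<and> strict_restr g' g})"
    unfolding tips'_def strict_sw[OF i insertI2[OF g]] by simp
  also have "\<dots> = tips' (\<Theta>' i) g" unfolding tips'_def using ng by auto
  finally show ?thesis .
qed

lemma tips_sw_iff: "(\<forall>h\<in>sw \<omega> I \<Theta>'. card (tips' (sw \<omega> I \<Theta>') h) = 1) \<longleftrightarrow>
   (\<forall>i\<in>I \<omega>. \<forall>g\<in>\<Theta>' i. card (tips' (\<Theta>' i) g) = 1)"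
proof
  assume h: "\<forall>h\<in>sw \<omega> I \<Theta>'. card (tips' (sw \<omega> I \<Theta>') h) = 1"
  show "\<forall>i\<in>I \<omega>. \<forall>g\<in>\<Theta>' i. card (tips' (\<Theta>' i) g) = 1"
  proof (intro ballI)
    fix i g assume i: "i \<in> I \<omega>" and g: "g \<in> \<Theta>' i"
    have "g(\<omega> \<mapsto> i) \<in> sw \<omega> I \<Theta>'" using i g unfolding mem_sw by auto
    thus "card (tips' (\<Theta>' i) g) = 1" using h tips_sw[OF i g] by auto
  qed
next
  assume h: "\<forall>i\<in>I \<omega>. \<forall>g\<in>\<Theta>' i. card (tips' (\<Theta>' i) g) = 1"
  show "\<forall>h\<in>sw \<omega> I \<Theta>'. card (tips' (sw \<omega> I \<Theta>') h) = 1"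
  proof
    fix k assume "k \<in> sw \<omega> I \<Theta>'"
    then obtain i g where i: "i \<in> I \<omega>" "g \<in> insert Map.empty (\<Theta>' i)" "k = g(\<omega> \<mapsto> i)" unfolding mem_sw by auto
    show "card (tips' (sw \<omega> I \<Theta>') k) = 1"
    proof (cases "g = Map.empty")
      case True then show ?thesis using tips_sw_empty[OF i(1)] i by simp
    next
      case False then show ?thesis using tips_sw[OF i(1)] h i by auto
    qed
  qed
qed


lemma events_sw: assumes "I \<omega> \<noteq> {}"
  shows "events (sw \<omega> I \<Theta>') = insert \<omega> (\<Union>i\<in>I \<omega>. events (\<Theta>' i))"
proof -
  have "x \<in> events (sw \<omega> I \<Theta>') \<longleftrightarrow> x \<in> insert \<omega> (\<Union>i\<in>I \<omega>. events (\<Theta>' i))" for x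
  proof
    assume "x \<in> events (sw \<omega> I \<Theta>')"
    then obtain h where h: "h \<in> sw \<omega> I \<Theta>'" "x \<in> dom h" unfolding events_def by auto
    then obtain i g where i: "i \<in> I \<omega>" "g \<in> insert Map.empty (\<Theta>' i)" "h = g(\<omega> \<mapsto> i)" unfolding mem_sw by auto
    show "x \<in> insert \<omega> (\<Union>i\<in>I \<omega>. events (\<Theta>' i))"
      using h i unfolding events_def by (auto split: if_splits)
  next
    assume x: "x \<in> insert \<omega> (\<Union>i\<in>I \<omega>. events (\<Theta>' i))"
    show "x \<in> events (sw \<omega> I \<Theta>')"
    proof (cases "x = \<omega>")
      case True
      obtain i where "i \<in> I \<omega>" using assms by auto
      hence "[\<omega> \<mapsto> i] \<in> sw \<omega> I \<Theta>'" unfolding mem_sw by auto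
      moreover have "\<omega> \<in> dom [\<omega> \<mapsto> i]" by simp
      ultimately show ?thesis using True unfolding events_def by blast
    next
      case False
      then obtain i g where i: "i \<in> I \<omega>" "g \<in> \<Theta>' i" "x \<in> dom g" using x unfolding events_def by auto
      hence "g(\<omega> \<mapsto> i) \<in> sw \<omega> I \<Theta>'" unfolding mem_sw by auto
      moreover have "x \<in> dom (g(\<omega> \<mapsto> i))" using i by simp
      ultimately show ?thesis unfolding events_def by blast
    qed
  qed
  thus ?thesis by blast
qed

lemma inputs_sw_root: "inputs (sw \<omega> I \<Theta>') \<omega> = I \<omega>"
proof -
  have "v \<in> inputs (sw \<omega> I \<Theta>') \<omega> \<longleftrightarrow> v \<in> I \<omega>" for v
  proof
    assume "v \<in> inputs (sw \<omega> I \<Theta>') \<omega>"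
    then obtain h where h: "h \<in> sw \<omega> I \<Theta>'" "v = the (h \<omega>)" unfolding inputs_def by auto
    then obtain i g where i: "i \<in> I \<omega>" "g \<in> insert Map.empty (\<Theta>' i)" "h = g(\<omega> \<mapsto> i)" unfolding mem_sw by auto
    thus "v \<in> I \<omega>" using h by simp
  next
    assume v: "v \<in> I \<omega>"
    hence "[\<omega> \<mapsto> v] \<in> sw \<omega> I \<Theta>'" unfolding mem_sw by auto
    thus "v \<in> inputs (sw \<omega> I \<Theta>') \<omega>" unfolding inputs_def by force
  qed
  thus ?thesis by blast
qed

lemma inputs_sw: assumes "x \<noteq> \<omega>"
  shows "inputs (sw \<omega> I \<Theta>') x = (\<Union>i\<in>I \<omega>. inputs (\<Theta>' i) x)"
proof -
  have "v \<in> inputs (sw \<omega> I \<Theta>') x \<longleftrightarrow> v \<in> (\<Union>i\<in>I \<omega>. inputs (\<Theta>' i) x)" for v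
  proof
    assume "v \<in> inputs (sw \<omega> I \<Theta>') x"
    then obtain h where h: "h \<in> sw \<omega> I \<Theta>'" "x \<in> dom h" "v = the (h x)" unfolding inputs_def by auto
    then obtain i g where i: "i \<in> I \<omega>" "g \<in> insert Map.empty (\<Theta>' i)" "h = g(\<omega> \<mapsto> i)" unfolding mem_sw by auto
    have "x \<in> dom g" "v = the (g x)" using h i assms by auto
    moreover hence "g \<in> \<Theta>' i" using i by auto
    ultimately show "v \<in> (\<Union>i\<in>I \<omega>. inputs (\<Theta>' i) x)" using i unfolding inputs_def by blast
  next
    assume "v \<in> (\<Union>i\<in>I \<omega>. inputs (\<Theta>' i) x)"
    then obtain i g where i: "i \<in> I \<omega>" "g \<in> \<Theta>' i" "x \<in> dom g" "v = the (g x)" unfolding inputs_def by auto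
    hence "g(\<omega> \<mapsto> i) \<in> sw \<omega> I \<Theta>'" unfolding mem_sw by auto
    moreover have "x \<in> dom (g(\<omega> \<mapsto> i))" "v = the ((g(\<omega> \<mapsto> i)) x)" using i assms by auto
    ultimately show "v \<in> inputs (sw \<omega> I \<Theta>') x" unfolding inputs_def by blast
  qed
  thus ?thesis by blast
qed

lemma Tot_ne: "\<forall>x\<in>E. J x \<noteq> {} \<Longrightarrow> Tot E J \<noteq> {}"
  using pick_Tot by blast

lemma Tot_single: "\<forall>x\<in>E. J x \<noteq> {} \<Longrightarrow> Tot E J = {Map.empty} \<Longrightarrow> E = {}"
  using pick_Tot[of E J] unfolding Tot_def by (auto simp: pick_def split: if_splits)

end

context swl begin

lemma decomp:
  assumes E: "\<omega> \<in> E" and fin: "finite (I \<omega>)" and ne: "\<forall>x\<in>E. I x \<noteq> {}"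
  shows "good E I (sw \<omega> I \<Theta>') \<longleftrightarrow> (\<forall>i\<in>I \<omega>. good (E - {\<omega>}) I (\<Theta>' i))"
proof
  have iw: "I \<omega> \<noteq> {}" using ne E by auto
  have ne': "\<forall>x\<in>E - {\<omega>}. I x \<noteq> {}" using ne by auto
  assume g: "good E I (sw \<omega> I \<Theta>')"
  have swne: "sw \<omega> I \<Theta>' \<noteq> {}" using iw unfolding sw_def by auto
  have mx: "maxs (insert Map.empty (\<Theta>' i)) = Tot (E - {\<omega>}) I" if "i \<in> I \<omega>" for i
  proof -
    have "maxs (sw \<omega> I \<Theta>') = Tot E I" using goodD(6)[OF g] swne by simp
    thus ?thesis using maxs_sw_iff[OF E] that by blast
  qed
  show "\<forall>i\<in>I \<omega>. good (E - {\<omega>}) I (\<Theta>' i)"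
  proof
    fix i assume i: "i \<in> I \<omega>"
    have tin: "t \<in> \<Theta>' i" if "t \<in> Tot (E - {\<omega>}) I" "t \<noteq> Map.empty" for t
      using mx[OF i] that unfolding maxs_def by auto
    have f1: "finite (\<Theta>' i)" using goodD(1)[OF g] finite_sw_iff[OF fin] i by simp
    have f2: "tree (\<Theta>' i)" using goodD(2)[OF g] tree_sw_iff i by simp
    have f3: "Map.empty \<notin> \<Theta>' i" using nempty i by auto
    have f4: "events (\<Theta>' i) = E - {\<omega>}"
    proof
      show "events (\<Theta>' i) \<subseteq> E - {\<omega>}"
      proof
        fix x assume "x \<in> events (\<Theta>' i)"
        then obtain h where h: "h \<in> \<Theta>' i" "x \<in> dom h" unfolding events_def by auto
        have "h(\<omega> \<mapsto> i) \<in> sw \<omega> I \<Theta>'" using h i unfolding mem_sw by auto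
        moreover have "x \<in> dom (h(\<omega> \<mapsto> i))" using h by simp
        ultimately have "x \<in> events (sw \<omega> I \<Theta>')" unfolding events_def by blast
        moreover have "x \<noteq> \<omega>" using nodom[OF i] h by auto
        moreover have "events (sw \<omega> I \<Theta>') = E" using goodD(4)[OF g] .
        ultimately show "x \<in> E - {\<omega>}" by blast
      qed
      show "E - {\<omega>} \<subseteq> events (\<Theta>' i)"
      proof
        fix x assume x: "x \<in> E - {\<omega>}"
        have "pick (E - {\<omega>}) I \<in> Tot (E - {\<omega>}) I" using pick_Tot ne' by blast
        moreover have "x \<in> dom (pick (E - {\<omega>}) I)" using x unfolding pick_def by auto
        ultimately show "x \<in> events (\<Theta>' i)" using tin unfolding events_def by fastforce
      qed
    qed
    have f5: "\<forall>x\<in>E - {\<omega>}. inputs (\<Theta>' i) x = I x"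
    proof (intro ballI equalityI subsetI)
      fix x v assume x: "x \<in> E - {\<omega>}" and v: "v \<in> inputs (\<Theta>' i) x"
      have "x \<noteq> \<omega>" using x by simp
      hence "v \<in> inputs (sw \<omega> I \<Theta>') x" using inputs_sw[of x] i v by auto
      moreover have "inputs (sw \<omega> I \<Theta>') x = I x" using goodD(5)[OF g] x by simp
      ultimately show "v \<in> I x" by simp
    next
      fix x v assume x: "x \<in> E - {\<omega>}" and v: "v \<in> I x"
      let ?t = "(pick (E - {\<omega>}) I)(x \<mapsto> v)"
      have "?t \<in> Tot (E - {\<omega>}) I" by (rule pick_upd_Tot[OF ne']) (use x v in auto)
      moreover have tx: "?t x = Some v" by simp
      hence "?t \<noteq> Map.empty" by (metis option.distinct(1))
      ultimately have "?t \<in> \<Theta>' i" using tin by blast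
      moreover have "x \<in> dom ?t" "v = the (?t x)" using tx by auto
      ultimately show "v \<in> inputs (\<Theta>' i) x" unfolding inputs_def by blast
    qed
    have f6: "\<Theta>' i = {} \<or> maxs (\<Theta>' i) = Tot (E - {\<omega>}) I"
      using mx[OF i] maxs_insert_empty[OF f3] by (auto split: if_splits)
    have f7: "\<forall>h\<in>\<Theta>' i. card (tips' (\<Theta>' i) h) = 1" using goodD(7)[OF g] tips_sw_iff i by blast
    show "good (E - {\<omega>}) I (\<Theta>' i)" unfolding good_def using f1 f2 f3 f4 f5 f6 f7 by simp
  qed
next
  have iw: "I \<omega> \<noteq> {}" using ne E by auto
  assume g: "\<forall>i\<in>I \<omega>. good (E - {\<omega>}) I (\<Theta>' i)"
  have gfin: "\<forall>i\<in>I \<omega>. finite (\<Theta>' i)" using goodD(1)[OF g[rule_format]] by blast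
  have gtree: "\<forall>i\<in>I \<omega>. tree (\<Theta>' i)" using goodD(2)[OF g[rule_format]] by blast
  have gev: "\<forall>i\<in>I \<omega>. events (\<Theta>' i) = E - {\<omega>}" using goodD(4)[OF g[rule_format]] by blast
  have gin: "\<forall>i\<in>I \<omega>. \<forall>x\<in>E - {\<omega>}. inputs (\<Theta>' i) x = I x" using goodD(5)[OF g[rule_format]] by blast
  have gmx: "\<forall>i\<in>I \<omega>. \<Theta>' i = {} \<or> maxs (\<Theta>' i) = Tot (E - {\<omega>}) I" using goodD(6)[OF g[rule_format]] by blast
  have gtp: "\<forall>i\<in>I \<omega>. \<forall>h\<in>\<Theta>' i. card (tips' (\<Theta>' i) h) = 1" using goodD(7)[OF g[rule_format]] by blast
  have f1: "finite (sw \<omega> I \<Theta>')" using gfin finite_sw_iff[OF fin] by blast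
  have f2: "tree (sw \<omega> I \<Theta>')" using gtree tree_sw_iff by blast
  have f3: "Map.empty \<notin> sw \<omega> I \<Theta>'" using empty_notin_sw .
  have "(\<Union>i\<in>I \<omega>. events (\<Theta>' i)) = E - {\<omega>}" using gev iw by simp
  hence f4: "events (sw \<omega> I \<Theta>') = E" using events_sw[OF iw] E by auto
  have f5: "\<forall>x\<in>E. inputs (sw \<omega> I \<Theta>') x = I x"
  proof
    fix x assume x: "x \<in> E"
    show "inputs (sw \<omega> I \<Theta>') x = I x"
    proof (cases "x = \<omega>")
      case True then show ?thesis using inputs_sw_root by simp
    next
      case False
      hence "\<forall>i\<in>I \<omega>. inputs (\<Theta>' i) x = I x" using gin x by blast
      hence "(\<Union>i\<in>I \<omega>. inputs (\<Theta>' i) x) = I x" using iw by simp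
      then show ?thesis using inputs_sw[OF False] by simp
    qed
  qed
  have "maxs (insert Map.empty (\<Theta>' i)) = Tot (E - {\<omega>}) I" if i: "i \<in> I \<omega>" for i
  proof (cases "\<Theta>' i = {}")
    case True
    hence "E - {\<omega>} = {}" using gev i unfolding events_def by auto
    hence "Tot (E - {\<omega>}) I = {Map.empty}" by (simp only: Tot_empty)
    then show ?thesis using True maxs_insert_empty[OF nempty[OF i]] by simp
  next
    case False
    hence "maxs (\<Theta>' i) = Tot (E - {\<omega>}) I" using gmx i by blast
    then show ?thesis using False maxs_insert_empty[OF nempty[OF i]] by simp
  qed
  hence f6: "maxs (sw \<omega> I \<Theta>') = Tot E I" using maxs_sw_iff[OF E] by blast
  have f7: "\<forall>h\<in>sw \<omega> I \<Theta>'. card (tips' (sw \<omega> I \<Theta>') h) = 1" using gtp tips_sw_iff by blast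
  show "good E I (sw \<omega> I \<Theta>')" unfolding good_def using f1 f2 f3 f4 f5 f6 f7 by simp
qed


end


lemma Ext_single: "Ext (single_event_space \<omega> I) = single_event_space \<omega> I"
proof
  show "Ext (single_event_space \<omega> I) \<subseteq> single_event_space \<omega> I"
  proof
    fix k assume "k \<in> Ext (single_event_space \<omega> I)"
    then obtain F where F: "k = join F" "F \<noteq> {}" "F \<subseteq> single_event_space \<omega> I" "compatible F"
      unfolding Ext_def by auto
    then obtain f where f: "f \<in> F" by auto
    then obtain a where a: "f = [\<omega> \<mapsto> a]" using F unfolding single_event_space_def by auto
    have "\<forall>g\<in>F. g \<subseteq>\<^sub>m f"
    proof
      fix g assume g: "g \<in> F"
      then obtain b where b: "g = [\<omega> \<mapsto> b]" using F unfolding single_event_space_def by auto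
      have "compatible {f, g}" using F(4) f g unfolding compatible_def by blast
      hence "a = b" using a b unfolding compat2 by auto
      thus "g \<subseteq>\<^sub>m f" using a b by simp
    qed
    hence "k = f" using join_eq f F(1) by metis
    thus "k \<in> single_event_space \<omega> I" using f F(3) by auto
  qed
  show "single_event_space \<omega> I \<subseteq> Ext (single_event_space \<omega> I)"
  proof
    fix h assume "h \<in> single_event_space \<omega> I"
    moreover have "compatible {h}" unfolding compatible_def by auto
    ultimately show "h \<in> Ext (single_event_space \<omega> I)" unfolding Ext_def
      by (intro CollectI exI[of _ "{h}"]) auto
  qed
qed

lemma maxExt_single: "maxExt (single_event_space \<omega> I) = single_event_space \<omega> I"
  unfolding maxExt_def Ext_single unfolding single_event_space_def map_le_def by auto

lemma cond_seq_sw: assumes wf: "WF \<omega> I \<Theta>'"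
  shows "cond_seq (single_event_space \<omega> I) (\<lambda>k. \<Theta>' (the (k \<omega>))) = sw \<omega> I \<Theta>'"
proof -
  have "{join {k, h'} | k h'. k \<in> maxExt (single_event_space \<omega> I) \<and> h' \<in> \<Theta>' (the (k \<omega>))}
      = {h'(\<omega> \<mapsto> i) | i h'. i \<in> I \<omega> \<and> h' \<in> \<Theta>' i}"
  proof (intro equalityI subsetI)
    fix x assume "x \<in> {join {k, h'} | k h'. k \<in> maxExt (single_event_space \<omega> I) \<and> h' \<in> \<Theta>' (the (k \<omega>))}"
    then obtain k h' where kh: "x = join {k, h'}" "k \<in> maxExt (single_event_space \<omega> I)" "h' \<in> \<Theta>' (the (k \<omega>))"
      by blast
    have "k \<in> single_event_space \<omega> I" using kh(2) maxExt_single by metis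
    then obtain i where "k = [\<omega> \<mapsto> i]" "i \<in> I \<omega>" unfolding single_event_space_def by blast
    hence ih: "x = join {[\<omega> \<mapsto> i], h'}" "i \<in> I \<omega>" "h' \<in> \<Theta>' i" using kh by auto
    have "\<omega> \<notin> dom h'" using wf ih unfolding WF_def by auto
    hence "x = h'(\<omega> \<mapsto> i)" using ih join_pair by simp
    thus "x \<in> {h'(\<omega> \<mapsto> i) | i h'. i \<in> I \<omega> \<and> h' \<in> \<Theta>' i}" using ih by blast
  next
    fix x assume "x \<in> {h'(\<omega> \<mapsto> i) | i h'. i \<in> I \<omega> \<and> h' \<in> \<Theta>' i}"
    then obtain i h' where ih: "x = h'(\<omega> \<mapsto> i)" "i \<in> I \<omega>" "h' \<in> \<Theta>' i" by auto
    have "\<omega> \<notin> dom h'" using wf ih unfolding WF_def by auto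
    hence "x = join {[\<omega> \<mapsto> i], h'}" using ih join_pair by metis
    moreover have "[\<omega> \<mapsto> i] \<in> single_event_space \<omega> I"
      unfolding single_event_space_def using ih by auto
    hence "[\<omega> \<mapsto> i] \<in> maxExt (single_event_space \<omega> I)" by (simp only: maxExt_single)
    moreover have "h' \<in> \<Theta>' (the ([\<omega> \<mapsto> i] \<omega>))" using ih by simp
    ultimately show "x \<in> {join {k, h'} | k h'. k \<in> maxExt (single_event_space \<omega> I) \<and> h' \<in> \<Theta>' (the (k \<omega>))}"
      by blast
  qed
  moreover have "sw \<omega> I \<Theta>' = single_event_space \<omega> I \<union> {h'(\<omega> \<mapsto> i) | i h'. i \<in> I \<omega> \<and> h' \<in> \<Theta>' i}"
    unfolding sw_def single_event_space_def by auto
  ultimately show ?thesis unfolding cond_seq_def by simp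
qed

lemma fwd: "cswitch E I \<Theta> \<Longrightarrow> finite E \<longrightarrow> (\<forall>\<omega>\<in>E. finite (I \<omega>) \<and> I \<omega> \<noteq> {}) \<longrightarrow> good E I \<Theta>"
proof (induction rule: cswitch.induct)
  case (empty I)
  then show ?case unfolding good_def tree_def events_def by simp
next
  case (step E \<omega>1 I \<Theta>')
  show ?case
  proof (intro impI)
    assume fE: "finite E" and fI: "\<forall>\<omega>\<in>E. finite (I \<omega>) \<and> I \<omega> \<noteq> {}"
    have g: "\<forall>i\<in>I \<omega>1. good (E - {\<omega>1}) I (\<Theta>' i)" using step fE fI by auto
    have wf: "WF \<omega>1 I \<Theta>'" unfolding WF_def
    proof (rule ballI, rule conjI)
      fix i assume i: "i \<in> I \<omega>1"
      show "\<forall>g\<in>\<Theta>' i. \<omega>1 \<notin> dom g" using goodD(4)[OF g[rule_format, OF i]] unfolding events_def by auto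
      show "Map.empty \<notin> \<Theta>' i" using goodD(3)[OF g[rule_format, OF i]] .
    qed
    have "good E I (sw \<omega>1 I \<Theta>')"
      using swl.decomp[OF swl.intro[OF wf] step(2)] fI step(2) g by auto
    thus "good E I (cond_seq (single_event_space \<omega>1 I) (\<lambda>k. \<Theta>' (the (k \<omega>1))))"
      using cond_seq_sw[OF wf] by simp
  qed
qed

lemma min_below:
  assumes fin: "finite E" and sub: "\<forall>h\<in>\<Theta>. dom h \<subseteq> E" and h: "h \<in> \<Theta>"
  shows "\<exists>m\<in>\<Theta>. m \<subseteq>\<^sub>m h \<and> (\<forall>k\<in>\<Theta>. k \<subseteq>\<^sub>m m \<longrightarrow> k = m)"
proof -
  obtain m where m: "m \<in> \<Theta> \<and> m \<subseteq>\<^sub>m h" and least: "\<forall>y. y \<in> \<Theta> \<and> y \<subseteq>\<^sub>m h \<longrightarrow> card (dom m) \<le> card (dom y)"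
    using ex_has_least_nat[of "\<lambda>m. m \<in> \<Theta> \<and> m \<subseteq>\<^sub>m h" h "\<lambda>m. card (dom m)"] h by auto
  have "\<forall>k\<in>\<Theta>. k \<subseteq>\<^sub>m m \<longrightarrow> k = m"
  proof (intro ballI impI)
    fix k assume k: "k \<in> \<Theta>" "k \<subseteq>\<^sub>m m"
    have "k \<subseteq>\<^sub>m h" using k m map_le_trans by blast
    hence c: "card (dom m) \<le> card (dom k)" using least k by blast
    have d: "dom k \<subseteq> dom m" using k map_le_implies_dom_le by blast
    have "finite (dom m)" using sub m fin finite_subset by blast
    hence "dom k = dom m" using card_seteq d c by blast
    hence "m \<subseteq>\<^sub>m k" using k unfolding map_le_def by auto
    thus "k = m" using k map_le_antisym by blast
  qed
  thus ?thesis using m by blast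
qed

lemma min_single:
  assumes g: "good E I \<Theta>" and m: "m \<in> \<Theta>" and mm: "\<forall>k\<in>\<Theta>. k \<subseteq>\<^sub>m m \<longrightarrow> k = m"
  shows "\<exists>x. dom m = {x}"
proof -
  have "tips' \<Theta> m = dom m" unfolding tips'_def strict_restr_def using mm by auto
  hence "card (dom m) = 1" using goodD(7)[OF g m] by simp
  thus ?thesis using card_1_singleton_iff by (metis One_nat_def)
qed

lemma sw_structure:
  assumes g: "good E I \<Theta>" and E: "E \<noteq> {}" and fin: "finite E"
  shows "\<exists>\<omega>\<in>E. \<exists>\<Theta>'. WF \<omega> I \<Theta>' \<and> \<Theta> = sw \<omega> I \<Theta>'"
proof -
  have sub: "\<forall>h\<in>\<Theta>. dom h \<subseteq> E" using goodD(4)[OF g] unfolding events_def by auto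
  have "\<Theta> \<noteq> {}" using goodD(4)[OF g] E unfolding events_def by auto
  then obtain h0 where h0: "h0 \<in> \<Theta>" by auto
  obtain m0 where m0: "m0 \<in> \<Theta>" "\<forall>k\<in>\<Theta>. k \<subseteq>\<^sub>m m0 \<longrightarrow> k = m0" using min_below[OF fin sub h0] by blast
  obtain \<omega> where om: "dom m0 = {\<omega>}" using min_single[OF g m0] by blast
  have \<omega>E: "\<omega> \<in> E" using sub m0 om by auto
  have A: "dom m = {\<omega>}" if m: "m \<in> \<Theta>" "\<forall>k\<in>\<Theta>. k \<subseteq>\<^sub>m m \<longrightarrow> k = m" for m
  proof -
    obtain \<omega>2 where o2: "dom m = {\<omega>2}" using min_single[OF g m] by blast
    show ?thesis
    proof (rule ccontr)
      assume "dom m \<noteq> {\<omega>}"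
      hence ne: "\<omega>2 \<noteq> \<omega>" using o2 by simp
      have "compatible {m0, m}" unfolding compat2 using om o2 ne by auto
      hence "m0 \<subseteq>\<^sub>m m \<or> m \<subseteq>\<^sub>m m0" using goodD(2)[OF g] m0 m unfolding tree_def by blast
      hence "dom m0 \<subseteq> dom m \<or> dom m \<subseteq> dom m0" using map_le_implies_dom_le by blast
      thus False using om o2 ne by auto
    qed
  qed
  have B: "\<exists>m\<in>\<Theta>. m \<subseteq>\<^sub>m h \<and> dom m = {\<omega>}" if h: "h \<in> \<Theta>" for h
    using min_below[OF fin sub h] A by blast
  have hw: "\<exists>i\<in>I \<omega>. h \<omega> = Some i" if h: "h \<in> \<Theta>" for h
  proof -
    obtain m where m: "m \<in> \<Theta>" "m \<subseteq>\<^sub>m h" "dom m = {\<omega>}" using B h by blast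
    hence "\<omega> \<in> dom h" using map_le_implies_dom_le by blast
    then obtain i where i: "h \<omega> = Some i" by auto
    have "i \<in> inputs \<Theta> \<omega>" unfolding inputs_def using h i by force
    thus ?thesis using goodD(5)[OF g \<omega>E] i by auto
  qed
  have root: "[\<omega> \<mapsto> i] \<in> \<Theta>" if i: "i \<in> I \<omega>" for i
  proof -
    have "i \<in> inputs \<Theta> \<omega>" using goodD(5)[OF g \<omega>E] i by simp
    then obtain h where h: "h \<in> \<Theta>" "\<omega> \<in> dom h" "i = the (h \<omega>)" unfolding inputs_def by auto
    obtain m where m: "m \<in> \<Theta>" "m \<subseteq>\<^sub>m h" "dom m = {\<omega>}" using B h by blast
    have "m \<omega> = h \<omega>" using m unfolding map_le_def by auto
    hence "m \<omega> = Some i" using h by auto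
    hence "m = [\<omega> \<mapsto> i]" using m(3) by (auto simp: fun_eq_iff dom_def)
    thus ?thesis using m by simp
  qed
  define \<Theta>' where "\<Theta>' i = {h(\<omega> := None) | h. h \<in> \<Theta> \<and> h \<omega> = Some i \<and> h \<noteq> [\<omega> \<mapsto> i]}" for i
  have wf: "WF \<omega> I \<Theta>'" unfolding WF_def
  proof (rule ballI, rule conjI)
    fix i assume i: "i \<in> I \<omega>"
    show "\<forall>g\<in>\<Theta>' i. \<omega> \<notin> dom g" unfolding \<Theta>'_def by auto
    show "Map.empty \<notin> \<Theta>' i"
    proof
      assume "Map.empty \<in> \<Theta>' i"
      then obtain h where h: "Map.empty = h(\<omega> := None)" "h \<omega> = Some i" "h \<noteq> [\<omega> \<mapsto> i]" unfolding \<Theta>'_def by auto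
      have "h = [\<omega> \<mapsto> i]"
      proof (rule ext)
        fix x show "h x = [\<omega> \<mapsto> i] x"
        proof (cases "x = \<omega>")
          case True then show ?thesis using h(2) by simp
        next
          case False
          have "(h(\<omega> := None)) x = Map.empty x" using fun_cong[OF h(1), of x] by simp
          thus ?thesis using False by simp
        qed
      qed
      thus False using h(3) by simp
    qed
  qed
  have "\<Theta> = sw \<omega> I \<Theta>'"
  proof (intro equalityI subsetI)
    fix h assume h: "h \<in> \<Theta>"
    obtain i where i: "i \<in> I \<omega>" "h \<omega> = Some i" using hw h by blast
    show "h \<in> sw \<omega> I \<Theta>'"
    proof (cases "h = [\<omega> \<mapsto> i]")
      case True
      then show ?thesis unfolding mem_sw using i by auto
    next
      case False
      hence "h(\<omega> := None) \<in> \<Theta>' i" unfolding \<Theta>'_def using h i by auto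
      moreover have "h = (h(\<omega> := None))(\<omega> \<mapsto> i)" using i by (auto simp: fun_eq_iff)
      ultimately show ?thesis unfolding mem_sw using i by blast
    qed
  next
    fix h assume "h \<in> sw \<omega> I \<Theta>'"
    then obtain i g where ig: "i \<in> I \<omega>" "g \<in> insert Map.empty (\<Theta>' i)" "h = g(\<omega> \<mapsto> i)" unfolding mem_sw by auto
    show "h \<in> \<Theta>"
    proof (cases "g = Map.empty")
      case True then show ?thesis using root ig by simp
    next
      case False
      then obtain h' where h': "g = h'(\<omega> := None)" "h' \<in> \<Theta>" "h' \<omega> = Some i" using ig unfolding \<Theta>'_def by auto
      have "h = h'" using ig(3) h' by (auto simp: fun_eq_iff)
      thus ?thesis using h' by simp
    qed
  qed
  thus ?thesis using wf \<omega>E by blast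
qed

lemma bwd: "finite E \<Longrightarrow> \<forall>\<omega>\<in>E. finite (I \<omega>) \<and> I \<omega> \<noteq> {} \<Longrightarrow> good E I \<Theta> \<Longrightarrow> cswitch E I \<Theta>"
proof (induction "card E" arbitrary: E \<Theta> rule: less_induct)
  case less
  show ?case
  proof (cases "E = {}")
    case True
    hence "\<Theta> = {}" using goodD(3,4)[OF less.prems(3)] unfolding events_def by auto
    then show ?thesis using True cswitch.empty by simp
  next
    case False
    obtain \<omega> \<Theta>' where o: "\<omega> \<in> E" "WF \<omega> I \<Theta>'" "\<Theta> = sw \<omega> I \<Theta>'"
      using sw_structure[OF less.prems(3) False less.prems(1)] by blast
    have ne: "\<forall>x\<in>E. I x \<noteq> {}" "finite (I \<omega>)" using less.prems(2) o(1) by auto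
    have g: "\<forall>i\<in>I \<omega>. good (E - {\<omega>}) I (\<Theta>' i)"
      using swl.decomp[OF swl.intro[OF o(2)] o(1) ne(2) ne(1)] less.prems(3) o(3) by simp
    have lt: "card (E - {\<omega>}) < card E" using o(1) less.prems(1) by (meson card_Diff1_less)
    have "\<forall>i\<in>I \<omega>. cswitch (E - {\<omega>}) I (\<Theta>' i)"
      using less.hyps[OF lt] less.prems(1,2) g by auto
    hence "cswitch E I (cond_seq (single_event_space \<omega> I) (\<lambda>k. \<Theta>' (the (k \<omega>))))"
      using cswitch.step[OF False o(1)] by blast
    thus ?thesis using cond_seq_sw[OF o(2)] o(3) by simp
  qed
qed

theorem corollary3:
  fixes E :: "'e set" and I :: "'e \<Rightarrow> 'v set" and \<Theta> :: "('e \<rightharpoonup> 'v) set"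
  assumes "finite E"
    and "\<forall>\<omega>\<in>E. finite (I \<omega>) \<and> I \<omega> \<noteq> {}"
  shows "cswitch E I \<Theta> \<longleftrightarrow>
           (space_of_input_histories \<Theta> \<and> causally_complete \<Theta> \<and> events \<Theta> = E
            \<and> (\<forall>\<omega>\<in>E. inputs \<Theta> \<omega> = I \<omega>) \<and> \<Theta> = Ext \<Theta>)"
  unfolding rhs_iff_good
proof
  assume "cswitch E I \<Theta>"
  from fwd[OF this] assms show "good E I \<Theta>" by simp
next
  assume "good E I \<Theta>"
  thus "cswitch E I \<Theta>" using bwd[OF assms] by simp
qed


end
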